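(* There is an absolute constant $C>0$ such that the following holds. Let $p\ge3$, $\mu>0$, $b,y\in\mathbb{R}^n$, and define $h:\mathbb{R}^n\to\mathbb{R}$ by $h(x)=\sum_{i=1}^n|x_i-b_i|^p+\mu\|x-y\|_2^2$. Then for every $x$ at which $h$ is thrice differentiable (all $x$ if $p>3$; all $x$ with $x_i\ne b_i$ for every $i$ if $p=3$) and all $u,w\in\mathbb{R}^n$, $$|\nabla^3 h(x)[u,u,w]|\le C\,p\,\mu^{-1/(p-2)}\,\|w\|_2\,u^\top\nabla^2 h(x)u.$$ *)

theory Defs
  imports "HOL-Analysis.Analysis"
begin

text \<open>Vectors in R^n are represented as functions nat => real; only the
coordinates i < n are relevant.  The dimension n is an ordinary variable so
that the constant C can be chosen independently of n.\<close>

definition hfun :: "nat \<Rightarrow> real \<Rightarrow> real \<Rightarrow> (nat \<Rightarrow> real) \<Rightarrow> (nat \<Rightarrow> real) \<Rightarrow> (nat \<Rightarrow> real) \<Rightarrow> real" where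
  "hfun n p \<mu> b y x = (\<Sum>i<n. \<bar>x i - b i\<bar> powr p) + \<mu> * (\<Sum>i<n. (x i - y i)^2)"

definition norm2 :: "nat \<Rightarrow> (nat \<Rightarrow> real) \<Rightarrow> real" where
  "norm2 n w = sqrt (\<Sum>i<n. (w i)^2)"

definition hess_form :: "((nat \<Rightarrow> real) \<Rightarrow> real) \<Rightarrow> (nat \<Rightarrow> real) \<Rightarrow> (nat \<Rightarrow> real) \<Rightarrow> real" where
  "hess_form f x u = deriv (deriv (\<lambda>t. f (\<lambda>i. x i + t * u i))) 0"

definition third_form :: "((nat \<Rightarrow> real) \<Rightarrow> real) \<Rightarrow> (nat \<Rightarrow> real) \<Rightarrow> (nat \<Rightarrow> real) \<Rightarrow> (nat \<Rightarrow> real) \<Rightarrow> real" where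
  "third_form f x u w = deriv (\<lambda>r. hess_form f (\<lambda>i. x i + r * w i) u) 0"

end

theory Submission
  imports Defs
begin


lemma powr_mult_self: "(x::real) > 0 \<Longrightarrow> x powr a * x = x powr (a+1)"
  by (simp add: powr_add)

lemma abs_powr_lim0:
  fixes q :: real assumes "q > 0"
  shows "((\<lambda>y::real. \<bar>y\<bar> powr q) \<longlongrightarrow> 0) (at 0)"
  by (rule tendsto_zero_powrI[where b=q]) (auto intro!: tendsto_eq_intros assms)

lemma deriv_abs_powr:
  fixes q s :: real
  assumes "q > 1 \<or> s \<noteq> 0"
  shows "((\<lambda>s. \<bar>s\<bar> powr q) has_real_derivative q * s * \<bar>s\<bar> powr (q - 2)) (at s)"
proof (cases "s = 0")
  case True
  then have q: "q > 1" using assms by auto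
  have "((\<lambda>y. (\<bar>y\<bar> powr q - \<bar>0\<bar> powr q) / (y - 0)) \<longlongrightarrow> 0) (at (0::real))"
  proof (rule tendsto_rabs_zero_cancel)
    have "((\<lambda>y::real. \<bar>y\<bar> powr (q-1)) \<longlongrightarrow> 0) (at 0)" using q by (intro abs_powr_lim0) auto
    moreover have "eventually (\<lambda>y. \<bar>y\<bar> powr (q-1) = \<bar>(\<bar>y\<bar> powr q - \<bar>0\<bar> powr q) / (y - 0)\<bar>) (at (0::real))"
      unfolding eventually_at_filter
    proof (intro always_eventually allI impI)
      fix y :: real assume "y \<noteq> 0"
      then have "\<bar>y\<bar> powr q = \<bar>y\<bar> powr (q-1) * \<bar>y\<bar>"
        using powr_mult_self[of "\<bar>y\<bar>" "q-1"] by simp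
      then show "\<bar>y\<bar> powr (q-1) = \<bar>(\<bar>y\<bar> powr q - \<bar>0\<bar> powr q) / (y - 0)\<bar>"
        using \<open>y \<noteq> 0\<close> by (simp add: abs_divide abs_mult)
    qed
    ultimately show "((\<lambda>y. \<bar>(\<bar>y\<bar> powr q - \<bar>0\<bar> powr q) / (y - 0)\<bar>) \<longlongrightarrow> 0) (at (0::real))"
      using tendsto_cong by (metis (mono_tags, lifting) eventually_mono)
  qed
  then show ?thesis using True by (simp add: has_field_derivative_iff)
next
  case False
  show ?thesis
  proof (cases "s > 0")
    case True
    have ev: "eventually (\<lambda>y. \<bar>y\<bar> powr q = y powr q) (nhds s)"
      using order_tendstoD(1)[OF filterlim_ident True] by (rule eventually_mono) auto
    have "s powr (q - 1) = s * s powr (q-2)" using True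
      using powr_mult_self[of s "q-2"] by (simp add: mult.commute)
    then show ?thesis using True
      by (subst DERIV_cong_ev[OF refl ev refl]) (auto intro!: derivative_eq_intros)
  next
    case neg: False
    with False have s: "s < 0" by auto
    have ev: "eventually (\<lambda>y. \<bar>y\<bar> powr q = (-y) powr q) (nhds s)"
      using order_tendstoD(2)[OF filterlim_ident s] by (rule eventually_mono) auto
    have e: "(-s) powr (q - 1) = (-s) * (-s) powr (q-2)" using s
      using powr_mult_self[of "-s" "q-2"] by (simp add: mult.commute)
    have "((\<lambda>y. (-y) powr q) has_real_derivative q * (-s) powr (q - of_nat 1) * (-1)) (at s)"
      by (rule DERIV_fun_powr) (auto intro!: derivative_eq_intros s)
    then show ?thesis using s e
      by (subst DERIV_cong_ev[OF refl ev refl]) (simp add: mult.assoc)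
  qed
qed

lemma deriv_mul_abs_powr:
  fixes q s :: real
  assumes q: "q > 0"
  shows "((\<lambda>s. s * \<bar>s\<bar> powr q) has_real_derivative (q + 1) * \<bar>s\<bar> powr q) (at s)"
proof (cases "s = 0")
  case True
  have "((\<lambda>y. (y * \<bar>y\<bar> powr q - 0 * \<bar>0\<bar> powr q) / (y - 0)) \<longlongrightarrow> 0) (at (0::real))"
  proof -
    have "((\<lambda>y::real. \<bar>y\<bar> powr q) \<longlongrightarrow> 0) (at 0)" using q by (intro abs_powr_lim0)
    moreover have "eventually (\<lambda>y. \<bar>y\<bar> powr q = (y * \<bar>y\<bar> powr q - 0 * \<bar>0\<bar> powr q) / (y - 0)) (at (0::real))"
      unfolding eventually_at_filter by (intro always_eventually allI impI) simp
    ultimately show ?thesis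
      by (rule Lim_transform_eventually)
  qed
  then show ?thesis using True by (simp add: has_field_derivative_iff)
next
  case False
  have d: "((\<lambda>s. \<bar>s\<bar> powr q) has_real_derivative q * s * \<bar>s\<bar> powr (q - 2)) (at s)"
    using deriv_abs_powr False by blast
  have a: "\<bar>s\<bar> > 0" using False by simp
  have e: "s * s * \<bar>s\<bar> powr (q - 2) = \<bar>s\<bar> powr q"
  proof -
    have "s * s = \<bar>s\<bar> * \<bar>s\<bar>" by (simp add: abs_mult_self_eq)
    moreover have "\<bar>s\<bar> powr (q-2) * \<bar>s\<bar> * \<bar>s\<bar> = \<bar>s\<bar> powr q"
      using powr_mult_self[OF a, of "q-2"] powr_mult_self[OF a, of "q-2+1"] by (simp only:) (simp add: algebra_simps)
    ultimately show ?thesis by (simp add: mult_ac)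
  qed
  have "((\<lambda>s. s * \<bar>s\<bar> powr q) has_real_derivative s * (q * s * \<bar>s\<bar> powr (q - 2)) + 1 * \<bar>s\<bar> powr q) (at s)"
    by (rule DERIV_mult'[OF DERIV_ident d])
  moreover have "s * (q * s * \<bar>s\<bar> powr (q - 2)) + 1 * \<bar>s\<bar> powr q = (q + 1) * \<bar>s\<bar> powr q"
    using e by (simp add: algebra_simps)
  ultimately show ?thesis by metis
qed

lemma deriv_abs_powr_lin:
  fixes q a c d t :: real
  assumes "q > 1 \<or> a + t*d - c \<noteq> 0"
  shows "((\<lambda>t. \<bar>a + t*d - c\<bar> powr q) has_real_derivative q * (a + t*d - c) * \<bar>a + t*d - c\<bar> powr (q - 2) * d) (at t)"
proof -
  have "((\<lambda>t. a + t*d - c) has_real_derivative d) (at t)"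
    by (auto intro!: derivative_eq_intros)
  from DERIV_chain2[OF deriv_abs_powr[OF assms] this] show ?thesis by simp
qed

lemma deriv_mul_abs_powr_lin:
  fixes q a c d t :: real
  assumes "q > 0"
  shows "((\<lambda>t. (a + t*d - c) * \<bar>a + t*d - c\<bar> powr q) has_real_derivative (q + 1) * \<bar>a + t*d - c\<bar> powr q * d) (at t)"
proof -
  have "((\<lambda>t. a + t*d - c) has_real_derivative d) (at t)"
    by (auto intro!: derivative_eq_intros)
  from DERIV_chain2[OF deriv_mul_abs_powr[OF assms] this] show ?thesis by simp
qed

lemma hess_eq:
  assumes p: "p \<ge> 3"
  shows "hess_form (hfun n p \<mu> b y) x u
     = (\<Sum>i<n. p * ((p - 2 + 1) * \<bar>x i - b i\<bar> powr (p - 2) * u i) * u i) + \<mu> * (\<Sum>i<n. 2 * u i * u i)"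
proof -
  define g1 where "g1 t = (\<Sum>i<n. p * ((x i + t * u i - b i) * \<bar>x i + t * u i - b i\<bar> powr (p - 2)) * u i)
      + \<mu> * (\<Sum>i<n. 2 * (x i + t * u i - y i) * u i)" for t
  have d1: "((\<lambda>t. hfun n p \<mu> b y (\<lambda>i. x i + t * u i)) has_real_derivative g1 t) (at t)" for t
    unfolding hfun_def g1_def
  proof (intro DERIV_add DERIV_cmult DERIV_sum)
    fix i
    show "((\<lambda>t. \<bar>x i + t * u i - b i\<bar> powr p) has_real_derivative
        p * ((x i + t * u i - b i) * \<bar>x i + t * u i - b i\<bar> powr (p - 2)) * u i) (at t)"
      using deriv_abs_powr_lin[of p "x i" t "u i" "b i"] p by (simp add: mult.assoc)
    show "((\<lambda>t. (x i + t * u i - y i)^2) has_real_derivative 2 * (x i + t * u i - y i) * u i) (at t)"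
      by (auto intro!: derivative_eq_intros)
  qed
  then have dg: "deriv (\<lambda>t. hfun n p \<mu> b y (\<lambda>i. x i + t * u i)) = g1"
    by (intro ext DERIV_imp_deriv)
  have d2: "(g1 has_real_derivative (\<Sum>i<n. p * ((p - 2 + 1) * \<bar>x i - b i\<bar> powr (p - 2) * u i) * u i) + \<mu> * (\<Sum>i<n. 2 * u i * u i)) (at 0)"
    unfolding g1_def[abs_def]
  proof (intro DERIV_add DERIV_cmult DERIV_sum)
    fix i
    show "((\<lambda>t. p * ((x i + t * u i - b i) * \<bar>x i + t * u i - b i\<bar> powr (p - 2)) * u i) has_real_derivative
        p * ((p - 2 + 1) * \<bar>x i - b i\<bar> powr (p - 2) * u i) * u i) (at 0)"
    proof -
      have h: "((\<lambda>t. (x i + t * u i - b i) * \<bar>x i + t * u i - b i\<bar> powr (p - 2)) has_real_derivative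
         (p - 2 + 1) * \<bar>x i - b i\<bar> powr (p - 2) * u i) (at 0)"
        using deriv_mul_abs_powr_lin[of "p-2" "x i" "u i" "b i" 0] p by simp
      show ?thesis using DERIV_cmult_right[OF DERIV_cmult[OF h, of p], of "u i"] by simp
    qed
    show "((\<lambda>t. 2 * (x i + t * u i - y i) * u i) has_real_derivative 2 * u i * u i) (at 0)"
      by (auto intro!: derivative_eq_intros)
  qed
  show ?thesis unfolding hess_form_def dg using DERIV_imp_deriv[OF d2] .
qed





lemma four_powr_bound:
  fixes q :: real assumes q: "q \<ge> 0"
  shows "(q + 2) * (q + 1) \<le> 4 * 4 powr q"
proof -
  have l2: "ln (4::real) \<ge> 1"
  proof -
    have "ln (4::real) = 2 * ln 2" using ln_realpow[of 2 2] by simp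
    then show ?thesis using ln2_ge_two_thirds by simp
  qed
  have "4 powr q = exp (q * ln 4)" by (simp add: powr_def)
  also have "exp (q * ln 4) \<ge> exp q" using l2 q by (simp add: mult_left_mono[of 1 "ln 4" q, simplified])
  finally have a: "4 powr q \<ge> exp q" .
  have "exp q = exp (q/2) * exp (q/2)" by (simp add: exp_add[symmetric])
  moreover have "exp (q/2) \<ge> 1 + q/2" by (rule exp_ge_add_one_self)
  moreover have "(1 + q/2) * (1 + q/2) \<le> exp (q/2) * exp (q/2)"
    using q \<open>exp (q/2) \<ge> 1 + q/2\<close> by (intro mult_mono) auto
  ultimately have "exp q \<ge> (1 + q/2) * (1 + q/2)" by simp
  then have "4 * exp q \<ge> (q+2)*(q+2)" by (simp add: algebra_simps)
  moreover have "(q+2)*(q+1) \<le> (q+2)*(q+2)" using q by (intro mult_left_mono) auto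
  ultimately show ?thesis using a by linarith
qed

lemma core_bound:
  fixes p \<mu> a :: real
  assumes p: "p \<ge> 3" and mu: "\<mu> > 0" and a: "a > 0"
  shows "(p-1)*(p-2) * a powr (p-3) \<le> 4 * \<mu> powr (-1/(p-2)) * (p*(p-1) * a powr (p-2) + \<mu>)"
proof -
  define m where "m = \<mu> powr (1/(p-2))"
  have m: "m > 0" using mu by (simp add: m_def)
  have mp: "m powr (p-2) = \<mu>" using p mu by (simp add: m_def powr_powr)
  have inv: "\<mu> powr (-1/(p-2)) = 1/m"
  proof -
    have "-1/(p-2) = -(1/(p-2))" by simp
    then show ?thesis using powr_minus[of \<mu> "1/(p-2)"] by (simp add: inverse_eq_divide m_def)
  qed
  have mq0: "m powr (p-3) * m = \<mu>"
    using powr_mult_self[OF m, of "p-3"] mp by simp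
  define M3 where "M3 = m powr (p-3)"
  have mq: "M3 = \<mu> / m" using mq0 m unfolding M3_def[symmetric] by (simp add: field_simps)
  define A3 where "A3 = a powr (p-3)"
  define A2 where "A2 = a powr (p-2)"
  define F where "F = 4 powr (p-3)"
  have F: "F > 0" by (simp add: F_def)
  have A: "A3 * a = A2" using powr_mult_self[OF a, of "p-3"] by (simp add: A2_def A3_def)
  have pp: "(p-1)*(p-2) \<ge> 0" using p by simp
  have H: "0 \<le> A2" by (simp add: A2_def)
  have H3: "0 \<le> A3" by (simp add: A3_def)
  have goal: "(p-1)*(p-2) * A3 \<le> 4 * (1/m) * (p*(p-1) * A2 + \<mu>)"
  proof (cases "a \<ge> m/4")
    case True
    have r: "a*4/m \<ge> 1" using True m by (simp add: field_simps)
    have "A3 = A3 * 1" by simp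
    also have "\<dots> \<le> A3 * (a*4/m)" using r H3 by (rule mult_left_mono)
    also have "\<dots> = (A3 * a) * (4/m)" by simp
    also have "\<dots> = A2 * (4/m)" using A by simp
    finally have c: "A3 \<le> A2 * (4/m)" .
    have "(p-1)*(p-2) * A3 \<le> (p-1)*(p-2) * (A2 * (4/m))"
      using c pp by (rule mult_left_mono)
    also have "\<dots> \<le> p*(p-1) * (A2 * (4/m))"
      using p m H by (intro mult_right_mono) auto
    also have "\<dots> = (4/m) * (p*(p-1) * A2)" by simp
    also have "\<dots> \<le> (4/m) * (p*(p-1) * A2 + \<mu>)"
      using m mu by (intro mult_left_mono) auto
    finally show ?thesis by simp
  next
    case False
    have "A3 \<le> (m/4) powr (p-3)"
      unfolding A3_def using False a p by (intro powr_mono2) auto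
    also have "\<dots> = M3 / F" using m by (simp add: powr_divide M3_def F_def)
    finally have b: "A3 \<le> (\<mu>/m) / F" using mq by simp
    have k: "(p-1)*(p-2) \<le> 4 * F"
      using four_powr_bound[of "p-3"] p unfolding F_def by (simp add: algebra_simps)
    have "(p-1)*(p-2) * A3 \<le> (p-1)*(p-2) * ((\<mu>/m) / F)"
      using b pp by (rule mult_left_mono)
    also have "\<dots> \<le> (4 * F) * ((\<mu>/m) / F)"
      using k m mu F by (intro mult_right_mono) auto
    also have "\<dots> = 4 * (\<mu>/m)" using F by simp
    also have "\<dots> = (4/m) * \<mu>" by simp
    also have "\<dots> \<le> (4/m) * (p*(p-1) * A2 + \<mu>)"
      using m mu p H by (intro mult_left_mono) auto
    finally show ?thesis by simp
  qed
  then show ?thesis using inv by (simp add: A2_def A3_def)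
qed





lemma alg:
  fixes p K N wi ui z P G A2 \<mu> :: real
  assumes p: "p \<ge> 3" and K: "K \<ge> 0" and N: "\<bar>wi\<bar> \<le> N" and A2: "A2 \<ge> 0" and mu: "\<mu> > 0"
    and G: "\<bar>z * P\<bar> = G"
    and c: "(p-1)*(p-2)*G \<le> 4*K*(p*(p-1)*A2 + \<mu>)"
  shows "\<bar>p*((p-2+1)*((p-2)*z*P*wi)*ui)*ui\<bar> \<le> 4*p*K*N*(p*((p-2+1)*A2*ui)*ui + \<mu>*(2*ui*ui))"
proof -
  have u2: "ui*ui \<ge> 0" by simp
  have "\<bar>p*((p-2+1)*((p-2)*z*P*wi)*ui)*ui\<bar> = (p*(ui*ui)) * \<bar>wi\<bar> * ((p-1)*(p-2)*\<bar>z*P\<bar>)"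
  proof -
    have e: "p*((p-2+1)*((p-2)*z*P*wi)*ui)*ui = (p*(ui*ui)) * wi * ((p-1)*(p-2)*(z*P))"
      by (simp add: algebra_simps)
    have n1: "\<bar>p*(ui*ui)\<bar> = p*(ui*ui)" using p u2 by simp
    have n2: "\<bar>(p-1)*(p-2)*(z*P)\<bar> = (p-1)*(p-2)*\<bar>z*P\<bar>" using p by (simp add: abs_mult)
    show ?thesis unfolding e abs_mult[of "p*(ui*ui)*wi"] abs_mult[of "p*(ui*ui)"] n1 n2 ..
  qed
  also have "\<dots> \<le> (p*(ui*ui)) * N * (4*K*(p*(p-1)*A2 + \<mu>))"
  proof (rule mult_mono)
    show "p * (ui * ui) * \<bar>wi\<bar> \<le> p * (ui * ui) * N" using p u2 N by (intro mult_left_mono) auto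
    show "(p-1)*(p-2)*\<bar>z*P\<bar> \<le> 4*K*(p*(p-1)*A2 + \<mu>)" using c G by simp
    show "0 \<le> p * (ui * ui) * N" using p u2 order_trans[OF abs_ge_zero N] by simp
    show "0 \<le> (p-1)*(p-2)*\<bar>z*P\<bar>" using p by simp
  qed
  also have "\<dots> \<le> (p*(ui*ui)) * N * (4*K*(p*(p-1)*A2 + 2*\<mu>))"
    using p N c G u2 K mu order_trans[OF abs_ge_zero N]
    by (intro mult_left_mono) auto
  also have "\<dots> = 4*p*K*N*(p*((p-2+1)*A2*ui)*ui + \<mu>*(2*ui*ui))"
    by (simp add: algebra_simps)
  finally show ?thesis .
qed

lemma abs_zP:
  fixes z p :: real assumes p: "p \<ge> 3"
  shows "\<bar>z * \<bar>z\<bar> powr (p-2-2)\<bar> = \<bar>z\<bar> powr (p-3)"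
proof (cases "z = 0")
  case True then show ?thesis by simp
next
  case False
  then have a: "\<bar>z\<bar> > 0" by simp
  have "\<bar>z * \<bar>z\<bar> powr (p-2-2)\<bar> = \<bar>z\<bar> powr (p-2-2) * \<bar>z\<bar>" by (simp add: abs_mult)
  also have "\<dots> = \<bar>z\<bar> powr (p-3)" using powr_mult_self[OF a, of "p-2-2"] by simp
  finally show ?thesis .
qed

lemma abs_le_norm2: "i < n \<Longrightarrow> \<bar>w i\<bar> \<le> norm2 n w"
proof -
  assume i: "i < n"
  have "(w i)^2 \<le> (\<Sum>j<n. (w j)^2)" using i by (intro member_le_sum) auto
  then have "sqrt ((w i)^2) \<le> norm2 n w" unfolding norm2_def by (rule real_sqrt_le_mono)
  then show ?thesis by simp
qed


lemma third_eq:
  assumes p: "p \<ge> 3" and cond: "p > 3 \<or> (\<forall>i<n. x i \<noteq> b i)"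
  shows "third_form (hfun n p \<mu> b y) x u w
    = (\<Sum>i<n. p*((p-2+1)*((p-2)*(x i - b i)*\<bar>x i - b i\<bar> powr (p-2-2)*w i)*u i)*u i) + \<mu>*0"
proof -
  have eq: "(\<lambda>r. hess_form (hfun n p \<mu> b y) (\<lambda>i. x i + r * w i) u)
     = (\<lambda>r. (\<Sum>i<n. p * ((p - 2 + 1) * \<bar>x i + r * w i - b i\<bar> powr (p - 2) * u i) * u i) + \<mu> * (\<Sum>i<n. 2 * u i * u i))"
    by (rule ext) (simp add: hess_eq[OF p])
  have d: "((\<lambda>r. (\<Sum>i<n. p * ((p - 2 + 1) * \<bar>x i + r * w i - b i\<bar> powr (p - 2) * u i) * u i) + \<mu> * (\<Sum>i<n. 2 * u i * u i))
     has_real_derivative (\<Sum>i<n. p*((p-2+1)*((p-2)*(x i - b i)*\<bar>x i - b i\<bar> powr (p-2-2)*w i)*u i)*u i) + \<mu>*0) (at 0)"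
  proof (rule DERIV_add)
    show "((\<lambda>r. \<mu> * (\<Sum>i<n. 2 * u i * u i)) has_real_derivative \<mu>*0) (at 0)"
      by (rule DERIV_cmult) (rule DERIV_const)
    show "((\<lambda>r. (\<Sum>i<n. p * ((p - 2 + 1) * \<bar>x i + r * w i - b i\<bar> powr (p - 2) * u i) * u i))
     has_real_derivative (\<Sum>i<n. p*((p-2+1)*((p-2)*(x i - b i)*\<bar>x i - b i\<bar> powr (p-2-2)*w i)*u i)*u i)) (at 0)"
    proof (rule DERIV_sum)
      fix i assume i: "i \<in> {..<n}"
      have c: "p-2 > 1 \<or> x i + 0 * w i - b i \<noteq> 0" using cond i p by auto
      have h: "((\<lambda>r. \<bar>x i + r * w i - b i\<bar> powr (p-2)) has_real_derivative (p-2)*(x i - b i)*\<bar>x i - b i\<bar> powr (p-2-2)*w i) (at 0)"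
        using deriv_abs_powr_lin[OF c] by simp
      show "((\<lambda>r. p * ((p-2+1) * \<bar>x i + r*w i - b i\<bar> powr (p-2) * u i) * u i) has_real_derivative
          p*((p-2+1)*((p-2)*(x i - b i)*\<bar>x i - b i\<bar> powr (p-2-2)*w i)*u i)*u i) (at 0)"
        by (intro DERIV_cmult_right DERIV_cmult h)
    qed
  qed
  show ?thesis unfolding third_form_def eq using DERIV_imp_deriv[OF d] .
qed

theorem lemma10:
  shows "\<exists>C>0. \<forall>(n::nat) (p::real) (\<mu>::real) (b::nat\<Rightarrow>real) (y::nat\<Rightarrow>real) (x::nat\<Rightarrow>real) (u::nat\<Rightarrow>real) (w::nat\<Rightarrow>real).
           p \<ge> 3 \<and> \<mu> > 0 \<and> (p > 3 \<or> (\<forall>i<n. x i \<noteq> b i)) \<longrightarrow>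
           \<bar>third_form (hfun n p \<mu> b y) x u w\<bar>
             \<le> C * p * \<mu> powr (-1 / (p - 2)) * norm2 n w * hess_form (hfun n p \<mu> b y) x u"
proof (intro exI[of _ 4] conjI allI impI)
  fix n :: nat and p \<mu> :: real and b y x u w :: "nat \<Rightarrow> real"
  assume H: "p \<ge> 3 \<and> \<mu> > 0 \<and> (p > 3 \<or> (\<forall>i<n. x i \<noteq> b i))"
  then have p: "p \<ge> 3" and mu: "\<mu> > 0" and cond: "p > 3 \<or> (\<forall>i<n. x i \<noteq> b i)" by auto
  define K where "K = \<mu> powr (-1 / (p - 2))"
  define N where "N = norm2 n w"
  have K: "K \<ge> 0" by (simp add: K_def)
  have bnd: "\<bar>p*((p-2+1)*((p-2)*(x i - b i)*\<bar>x i - b i\<bar> powr (p-2-2)*w i)*u i)*u i\<bar>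
      \<le> 4*p*K*N*(p*((p-2+1)*\<bar>x i - b i\<bar> powr (p-2)*u i)*u i + \<mu>*(2*u i*u i))" if i: "i < n" for i
  proof (rule alg[OF p K _ _ mu abs_zP[OF p]])
    show "\<bar>w i\<bar> \<le> N" unfolding N_def using i by (rule abs_le_norm2)
    show "0 \<le> \<bar>x i - b i\<bar> powr (p-2)" by simp
    show "(p-1)*(p-2)*\<bar>x i - b i\<bar> powr (p-3) \<le> 4*K*(p*(p-1)*\<bar>x i - b i\<bar> powr (p-2) + \<mu>)"
    proof (cases "x i = b i")
      case True
      then show ?thesis using p mu K by simp
    next
      case False
      then show ?thesis using core_bound[OF p mu, of "\<bar>x i - b i\<bar>"] unfolding K_def by simp
    qed
  qed
  have "\<bar>third_form (hfun n p \<mu> b y) x u w\<bar>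
      = \<bar>\<Sum>i<n. p*((p-2+1)*((p-2)*(x i - b i)*\<bar>x i - b i\<bar> powr (p-2-2)*w i)*u i)*u i\<bar>"
    using third_eq[OF p cond] by simp
  also have "\<dots> \<le> (\<Sum>i<n. \<bar>p*((p-2+1)*((p-2)*(x i - b i)*\<bar>x i - b i\<bar> powr (p-2-2)*w i)*u i)*u i\<bar>)"
    by (rule sum_abs)
  also have "\<dots> \<le> (\<Sum>i<n. 4*p*K*N*(p*((p-2+1)*\<bar>x i - b i\<bar> powr (p-2)*u i)*u i + \<mu>*(2*u i*u i)))"
    by (rule sum_mono) (use bnd in auto)
  also have "\<dots> = 4*p*K*N*((\<Sum>i<n. p*((p-2+1)*\<bar>x i - b i\<bar> powr (p-2)*u i)*u i) + \<mu>*(\<Sum>i<n. 2*u i*u i))"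
    by (simp only: sum_distrib_left sum.distrib distrib_left)
  also have "\<dots> = 4 * p * \<mu> powr (-1 / (p - 2)) * norm2 n w * hess_form (hfun n p \<mu> b y) x u"
    by (simp add: hess_eq[OF p] K_def N_def)
  finally show "\<bar>third_form (hfun n p \<mu> b y) x u w\<bar>
             \<le> 4 * p * \<mu> powr (-1 / (p - 2)) * norm2 n w * hess_form (hfun n p \<mu> b y) x u" .
qed (simp)

end
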